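(* Assume $p\neq 0.5$ and $e_{-1}+e_{+1}<1$. Let $\mathcal F$ be a class of measurable classifiers $f:\mathcal X\to\{-1,+1\}$ such that $\min_{f\in\mathcal F}R_{\mathcal D}(f)$ is attained, and let $\tilde f^*\in\arg\min_{f\in\mathcal F}\mathbb E_{\tilde{\mathcal D}}[\mathbb 1_{\mathrm{peer}}(f(X),\tilde Y)]$. Then $$\bigl|R_{\mathcal D}(\tilde f^* )-\min_{f\in\mathcal F}R_{\mathcal D}(f)\bigr|\le|\delta_p|,\qquad \delta_p:=\mathbb P(Y=+1)-\mathbb P(Y=-1),$$ where $R_{\mathcal D}(f)=\mathbb P_{(X,Y)\sim\mathcal D}(f(X)\neq Y)$.
   Context: Let $\mathcal X\subseteq\mathbb R^d$ and let $(X,Y)$ be a random pair with distribution $\mathcal D$ on $\mathcal X\times\{-1,+1\}$, with $p:=\mathbb P(Y=+1)\in(0,1)$. A noisy label $\tilde Y\in\{-1,+1\}$ is generated with noise rates $e_{+1}:=\mathbb P(\tilde Y=-1\mid Y=+1)$, $e_{-1}:=\mathbb P(\tilde Y=+1\mid Y=-1)$, where $\tilde Y$ is conditionally independent of $X$ given $Y$; $\tilde{\mathcal D}$ is the distribution of $(X,\tilde Y)$. The 0-1 loss is $\mathbb 1(a,b)=1$ if $a\neq b$ and $0$ otherwise. The expected 0-1 peer loss of $f$ on $\tilde{\mathcal D}$ is $$\mathbb E_{\tilde{\mathcal D}}[\mathbb 1_{\mathrm{peer}}(f(X),\tilde Y)]:=\mathbb E[\mathbb 1(f(X),\tilde Y)]-\mathbb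 E[\mathbb 1(f(X_1),\tilde Y_2)],$$ where $(X,\tilde Y),(X_1,\tilde Y_1),(X_2,\tilde Y_2)$ are i.i.d. draws from $\tilde{\mathcal D}$. *)

theory Defs
  imports "HOL-Probability.Probability"
begin

text \<open>0-1 loss on labels in {-1,+1} (represented as integers).\<close>
definition zero_one :: "int \<Rightarrow> int \<Rightarrow> real" where
  "zero_one a b = (if a \<noteq> b then 1 else 0)"

definition joint_distr :: "'w measure \<Rightarrow> ('w \<Rightarrow> 'a::euclidean_space) \<Rightarrow> ('w \<Rightarrow> int)
    \<Rightarrow> ('a \<times> int) measure" where
  "joint_distr M X L = distr M (borel \<Otimes>\<^sub>M count_space UNIV) (\<lambda>\<omega>. (X \<omega>, L \<omega>))"

definition risk :: "('a \<times> int) measure \<Rightarrow> ('a \<Rightarrow> int) \<Rightarrow> real" where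
  "risk D f = measure D {z \<in> space D. f (fst z) \<noteq> snd z}"

definition peer_risk :: "('a \<times> int) measure \<Rightarrow> ('a \<Rightarrow> int) \<Rightarrow> real" where
  "peer_risk Dt f =
     (\<integral>z. zero_one (f (fst z)) (snd z) \<partial>Dt)
     - (\<integral>zz. zero_one (f (fst (fst zz))) (snd (snd zz)) \<partial>(Dt \<Otimes>\<^sub>M Dt))"

end

theory Submission
  imports Defs
begin

lemma atoms8:
  fixes A B C :: "'w \<Rightarrow> int"
  assumes M: "prob_space M"
    and vals: "\<forall>\<omega>\<in>space M. A \<omega> \<in> {-1,1} \<and> B \<omega> \<in> {-1,1} \<and> C \<omega> \<in> {-1,1}"
    and ms: "\<And>a b c. {\<omega>\<in>space M. A \<omega> = a \<and> B \<omega> = b \<and> C \<omega> = c} \<in> sets M"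
  shows "measure M {\<omega>\<in>space M. Q (A \<omega>) (B \<omega>) (C \<omega>)} =
     (\<Sum>v\<in>{-1,1::int}\<times>{-1,1::int}\<times>{-1,1::int}. if Q (fst v) (fst (snd v)) (snd (snd v))
        then measure M {\<omega>\<in>space M. A \<omega> = fst v \<and> B \<omega> = fst (snd v) \<and> C \<omega> = snd (snd v)} else 0)"
proof -
  interpret prob_space M by fact
  let ?V = "{v\<in>{-1,1::int}\<times>{-1,1::int}\<times>{-1,1::int}. Q (fst v) (fst (snd v)) (snd (snd v))}"
  let ?E = "\<lambda>v. {\<omega>\<in>space M. A \<omega> = fst v \<and> B \<omega> = fst (snd v) \<and> C \<omega> = snd (snd v)}"
  have "{\<omega>\<in>space M. Q (A \<omega>) (B \<omega>) (C \<omega>)} = (\<Union>v\<in>?V. ?E v)"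
    using vals by auto
  then have "measure M {\<omega>\<in>space M. Q (A \<omega>) (B \<omega>) (C \<omega>)} = (\<Sum>v\<in>?V. measure M (?E v))"
    apply simp
    apply (rule finite_measure_finite_Union)
    using ms by (auto simp: disjoint_family_on_def)
  also have "\<dots> = (\<Sum>v\<in>{-1,1::int}\<times>{-1,1::int}\<times>{-1,1::int}. if Q (fst v) (fst (snd v)) (snd (snd v))
        then measure M (?E v) else 0)"
    by (rule sum.inter_filter) simp
  finally show ?thesis .
qed

lemma sum8: "(\<Sum>v\<in>{-1,1::int}\<times>{-1,1::int}\<times>{-1,1::int}. g v) =
  g (1,1,1) + g (1,1,-1) + g (1,-1,1) + g (1,-1,-1) + g (-1,1,1) + g (-1,1,-1) + g (-1,-1,1) + g (-1,-1,-1)"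
  by (simp add: insert_Times_insert sum.insert sum.union_disjoint add_ac)

lemma meas_set:
  fixes f :: "'a::euclidean_space \<Rightarrow> int"
  assumes "f \<in> measurable borel (count_space UNIV)"
  shows "{z\<in>space (borel \<Otimes>\<^sub>M count_space UNIV). f (fst z) \<noteq> (snd z::int)} \<in> sets (borel \<Otimes>\<^sub>M count_space UNIV)"
  using assms by measurable

lemma meas_set2:
  fixes f :: "'a::euclidean_space \<Rightarrow> int" and X :: "'w \<Rightarrow> 'a"
  assumes "f \<in> measurable borel (count_space UNIV)" "X \<in> measurable M borel"
   "Y \<in> measurable M (count_space UNIV)" "Yt \<in> measurable M (count_space UNIV)"
  shows "{\<omega>\<in>space M. f (X \<omega>) = a \<and> Y \<omega> = b \<and> Yt \<omega> = (c::int)} \<in> sets M"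
  using assms by measurable

lemma space_N: "space (borel \<Otimes>\<^sub>M count_space UNIV) = (UNIV :: ('a::euclidean_space \<times> int) set)"
  by (simp add: space_pair_measure)

lemma pair_meas:
  fixes X :: "'w \<Rightarrow> 'a::euclidean_space" and L :: "'w \<Rightarrow> int"
  assumes "X \<in> measurable M borel" "L \<in> measurable M (count_space UNIV)"
  shows "(\<lambda>\<omega>. (X \<omega>, L \<omega>)) \<in> measurable M (borel \<Otimes>\<^sub>M count_space UNIV)"
  using assms by measurable

lemma measure_jd:
  fixes X :: "'w \<Rightarrow> 'a::euclidean_space" and L :: "'w \<Rightarrow> int"
  assumes "X \<in> measurable M borel" "L \<in> measurable M (count_space UNIV)"
    and "S \<in> sets (borel \<Otimes>\<^sub>M count_space UNIV)"
  shows "measure (joint_distr M X L) S = measure M {\<omega>\<in>space M. (X \<omega>, L \<omega>) \<in> S}"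
  unfolding joint_distr_def
  by (subst measure_distr[OF pair_meas[OF assms(1,2)] assms(3)]) (auto intro: arg_cong[where f="measure M"])

lemma risk_eq:
  fixes X :: "'w \<Rightarrow> 'a::euclidean_space" and L :: "'w \<Rightarrow> int"
  assumes "X \<in> measurable M borel" "L \<in> measurable M (count_space UNIV)"
    and f: "f \<in> measurable borel (count_space UNIV)"
  shows "risk (joint_distr M X L) f = measure M {\<omega>\<in>space M. f (X \<omega>) \<noteq> L \<omega>}"
proof -
  have "{z. f (fst z) \<noteq> snd z} \<in> sets (borel \<Otimes>\<^sub>M count_space UNIV)"
    using meas_set[OF f] by (simp add: space_N)
  moreover have "space (joint_distr M X L) = UNIV"
    by (simp add: joint_distr_def space_N)
  ultimately show ?thesis unfolding risk_def
    by (simp add: measure_jd[OF assms(1,2)])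
qed

lemma set_fst:
  fixes f :: "'a::euclidean_space \<Rightarrow> int"
  assumes "f \<in> measurable borel (count_space UNIV)"
  shows "{z::'a\<times>int. f (fst z) = c} \<in> sets (borel \<Otimes>\<^sub>M count_space UNIV)"
proof -
  have "f -` {c} \<in> sets borel" using measurable_sets[OF assms, of "{c}"] by simp
  then have "f -` {c} \<times> UNIV \<in> sets (borel \<Otimes>\<^sub>M (count_space UNIV :: int measure))" by auto
  moreover have "{z::'a\<times>int. f (fst z) = c} = f -` {c} \<times> UNIV" by auto
  ultimately show ?thesis by simp
qed

lemma set_snd:
  shows "{z::'a::euclidean_space\<times>int. snd z \<noteq> c} \<in> sets (borel \<Otimes>\<^sub>M count_space UNIV)"
proof -
  have "(UNIV::'a set) \<times> (-{c}) \<in> sets (borel \<Otimes>\<^sub>M (count_space UNIV :: int measure))" by auto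
  moreover have "{z::'a\<times>int. snd z \<noteq> c} = UNIV \<times> (-{c})" by auto
  ultimately show ?thesis by simp
qed

lemma peer_eq:
  fixes X :: "'w \<Rightarrow> 'a::euclidean_space" and L :: "'w \<Rightarrow> int"
  assumes M: "prob_space M" and XM: "X \<in> measurable M borel" and LM: "L \<in> measurable M (count_space UNIV)"
    and f: "f \<in> measurable borel (count_space UNIV)" and fv: "\<forall>x. f x \<in> {-1,1}"
  shows "peer_risk (joint_distr M X L) f = measure M {\<omega>\<in>space M. f (X \<omega>) \<noteq> L \<omega>}
     - (measure M {\<omega>\<in>space M. f (X \<omega>) = 1} * measure M {\<omega>\<in>space M. L \<omega> \<noteq> 1}
      + measure M {\<omega>\<in>space M. f (X \<omega>) = -1} * measure M {\<omega>\<in>space M. L \<omega> \<noteq> -1})"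
proof -
  interpret prob_space M by fact
  let ?N = "borel \<Otimes>\<^sub>M count_space UNIV :: ('a \<times> int) measure"
  let ?D = "joint_distr M X L"
  have PM: "(\<lambda>\<omega>. (X \<omega>, L \<omega>)) \<in> measurable M ?N" by (rule pair_meas[OF XM LM])
  have zm: "(\<lambda>z. zero_one (f (fst z)) (snd z)) \<in> borel_measurable ?N"
    unfolding zero_one_def using f by measurable
  have I1: "(\<integral>z. zero_one (f (fst z)) (snd z) \<partial>?D) = measure M {\<omega>\<in>space M. f (X \<omega>) \<noteq> L \<omega>}"
  proof -
    have "(\<integral>z. zero_one (f (fst z)) (snd z) \<partial>?D) = (\<integral>\<omega>. zero_one (f (X \<omega>)) (L \<omega>) \<partial>M)"
      unfolding joint_distr_def by (subst integral_distr[OF PM zm]) simp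
    also have "\<dots> = (\<integral>\<omega>. indicator {\<omega>\<in>space M. f (X \<omega>) \<noteq> L \<omega>} \<omega> \<partial>M)"
      by (rule Bochner_Integration.integral_cong) (auto simp: zero_one_def indicator_def)
    also have "\<dots> = measure M {\<omega>\<in>space M. f (X \<omega>) \<noteq> L \<omega>}"
      by (simp add: Int_absorb2 subset_eq)
    finally show ?thesis .
  qed
  have PD: "prob_space ?D" unfolding joint_distr_def by (rule prob_space_distr[OF PM])
  interpret D: prob_space ?D by fact
  have PDD: "prob_space (?D \<Otimes>\<^sub>M ?D)" by (rule prob_space_pair[OF PD PD])
  interpret DD: prob_space "?D \<Otimes>\<^sub>M ?D" by fact
  have sD: "sets ?D = sets ?N" by (simp add: joint_distr_def)
  have spD: "space ?D = UNIV" by (simp add: joint_distr_def space_N)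
  define S1 where "S1 = {z::'a\<times>int. f (fst z) = 1}"
  define S2 where "S2 = {z::'a\<times>int. f (fst z) = -1}"
  define T1 where "T1 = {z::'a\<times>int. snd z \<noteq> 1}"
  define T2 where "T2 = {z::'a\<times>int. snd z \<noteq> -1}"
  have S1m: "S1 \<in> sets ?D" and S2m: "S2 \<in> sets ?D" and T1m: "T1 \<in> sets ?D" and T2m: "T2 \<in> sets ?D"
  proof -
    show "S1 \<in> sets ?D" "S2 \<in> sets ?D" "T1 \<in> sets ?D" "T2 \<in> sets ?D"
      unfolding sD S1_def S2_def T1_def T2_def using set_fst[OF f] set_snd by blast+
  qed
  have mt: "measure (?D \<Otimes>\<^sub>M ?D) (A \<times> B) = measure ?D A * measure ?D B"
    if "A \<in> sets ?D" "B \<in> sets ?D" for A B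
    using D.emeasure_pair_measure_Times[OF that] by (simp add: measure_def enn2real_mult)
  have ptw: "zero_one (f (fst (fst zz))) (snd (snd zz)) = indicator (S1 \<times> T1) zz + indicator (S2 \<times> T2) zz" for zz
    using fv[rule_format, of "fst (fst zz)"]
    by (cases zz) (auto simp: zero_one_def indicator_def S1_def S2_def T1_def T2_def)
  have I2: "(\<integral>zz. zero_one (f (fst (fst zz))) (snd (snd zz)) \<partial>(?D \<Otimes>\<^sub>M ?D))
      = measure ?D S1 * measure ?D T1 + measure ?D S2 * measure ?D T2"
  proof -
    have m1: "S1 \<times> T1 \<in> sets (?D \<Otimes>\<^sub>M ?D)" "S2 \<times> T2 \<in> sets (?D \<Otimes>\<^sub>M ?D)"
      using S1m S2m T1m T2m by auto
    have "(\<integral>zz. zero_one (f (fst (fst zz))) (snd (snd zz)) \<partial>(?D \<Otimes>\<^sub>M ?D))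
       = (\<integral>zz. indicator (S1 \<times> T1) zz + indicator (S2 \<times> T2) zz \<partial>(?D \<Otimes>\<^sub>M ?D))"
      by (simp add: ptw)
    also have "\<dots> = measure (?D \<Otimes>\<^sub>M ?D) (S1 \<times> T1) + measure (?D \<Otimes>\<^sub>M ?D) (S2 \<times> T2)"
      using m1 by (subst Bochner_Integration.integral_add) (auto simp: Int_absorb2 sets.sets_into_space less_top[symmetric] DD.emeasure_finite)
    also have "\<dots> = measure ?D S1 * measure ?D T1 + measure ?D S2 * measure ?D T2"
      using S1m S2m T1m T2m by (simp add: mt)
    finally show ?thesis .
  qed
  have "measure ?D S1 = measure M {\<omega>\<in>space M. f (X \<omega>) = 1}"
    using S1m unfolding sD by (simp add: measure_jd[OF XM LM] S1_def)
  moreover have "measure ?D S2 = measure M {\<omega>\<in>space M. f (X \<omega>) = -1}"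
    using S2m unfolding sD by (simp add: measure_jd[OF XM LM] S2_def)
  moreover have "measure ?D T1 = measure M {\<omega>\<in>space M. L \<omega> \<noteq> 1}"
    using T1m unfolding sD by (simp add: measure_jd[OF XM LM] T1_def)
  moreover have "measure ?D T2 = measure M {\<omega>\<in>space M. L \<omega> \<noteq> -1}"
    using T2m unfolding sD by (simp add: measure_jd[OF XM LM] T2_def)
  ultimately show ?thesis unfolding peer_risk_def I1 I2 by simp
qed


lemma per_f:
  fixes M :: "'w measure" and X :: "'w \<Rightarrow> 'a::euclidean_space" and Y Yt :: "'w \<Rightarrow> int"
    and e_pos e_neg :: real and f :: "'a \<Rightarrow> int"
  assumes M: "prob_space M"
    and X_meas: "X \<in> measurable M borel"
    and Y_meas: "Y \<in> measurable M (count_space UNIV)"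
    and Yt_meas: "Yt \<in> measurable M (count_space UNIV)"
    and Y_vals: "\<forall>\<omega>\<in>space M. Y \<omega> \<in> {-1, 1}"
    and Yt_vals: "\<forall>\<omega>\<in>space M. Yt \<omega> \<in> {-1, 1}"
    and p_pos: "0 < measure M {\<omega>\<in>space M. Y \<omega> = 1}"
    and p_lt1: "measure M {\<omega>\<in>space M. Y \<omega> = 1} < 1"
    and e_pos_def: "e_pos = measure M {\<omega>\<in>space M. Y \<omega> = 1 \<and> Yt \<omega> = -1}
                            / measure M {\<omega>\<in>space M. Y \<omega> = 1}"
    and e_neg_def: "e_neg = measure M {\<omega>\<in>space M. Y \<omega> = -1 \<and> Yt \<omega> = 1}
                            / measure M {\<omega>\<in>space M. Y \<omega> = -1}"
    and cond_indep: "\<forall>A\<in>sets borel. \<forall>y y'.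
          measure M {\<omega>\<in>space M. X \<omega> \<in> A \<and> Y \<omega> = y \<and> Yt \<omega> = y'}
            * measure M {\<omega>\<in>space M. Y \<omega> = y}
          = measure M {\<omega>\<in>space M. X \<omega> \<in> A \<and> Y \<omega> = y}
            * measure M {\<omega>\<in>space M. Y \<omega> = y \<and> Yt \<omega> = y'}"
    and f: "f \<in> measurable borel (count_space UNIV)" and fv: "\<forall>x. f x \<in> {-1,1}"
  shows "peer_risk (joint_distr M X Yt) f = (1 - e_pos - e_neg) *
     (risk (joint_distr M X Y) f - measure M {\<omega>\<in>space M. f (X \<omega>) = 1} * measure M {\<omega>\<in>space M. Y \<omega> = -1}
       - (1 - measure M {\<omega>\<in>space M. f (X \<omega>) = 1}) * measure M {\<omega>\<in>space M. Y \<omega> = 1})"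
    and "measure M {\<omega>\<in>space M. Y \<omega> = -1} = 1 - measure M {\<omega>\<in>space M. Y \<omega> = 1}"
proof -
  interpret prob_space M by fact
  have vals: "\<forall>\<omega>\<in>space M. f (X \<omega>) \<in> {-1,1} \<and> Y \<omega> \<in> {-1,1} \<and> Yt \<omega> \<in> {-1,1}"
    using fv Y_vals Yt_vals by blast
  have ms: "\<And>a b c. {\<omega>\<in>space M. f (X \<omega>) = a \<and> Y \<omega> = b \<and> Yt \<omega> = c} \<in> sets M"
    by (rule meas_set2[OF f X_meas Y_meas Yt_meas])
  note A8 = atoms8[OF M vals ms]
  define m where "m s y t = measure M {\<omega>\<in>space M. f (X \<omega>) = s \<and> Y \<omega> = y \<and> Yt \<omega> = t}" for s y t
  have R: "measure M {\<omega>\<in>space M. f (X \<omega>) \<noteq> Y \<omega>} = m 1 (-1) 1 + m 1 (-1) (-1) + m (-1) 1 1 + m (-1) 1 (-1)"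
    using A8[of "\<lambda>a b c. a \<noteq> b"] by (simp add: sum8 m_def)
  have Rt: "measure M {\<omega>\<in>space M. f (X \<omega>) \<noteq> Yt \<omega>} = m 1 1 (-1) + m 1 (-1) (-1) + m (-1) 1 1 + m (-1) (-1) 1"
    using A8[of "\<lambda>a b c. a \<noteq> c"] by (simp add: sum8 m_def)
  have A1: "measure M {\<omega>\<in>space M. f (X \<omega>) = 1} = m 1 1 1 + m 1 1 (-1) + m 1 (-1) 1 + m 1 (-1) (-1)"
    using A8[of "\<lambda>a b c. a = 1"] by (simp add: sum8 m_def)
  have Am: "measure M {\<omega>\<in>space M. f (X \<omega>) = -1} = m (-1) 1 1 + m (-1) 1 (-1) + m (-1) (-1) 1 + m (-1) (-1) (-1)"
    using A8[of "\<lambda>a b c. a = -1"] by (simp add: sum8 m_def)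
  have T1: "measure M {\<omega>\<in>space M. Yt \<omega> \<noteq> 1} = m 1 1 (-1) + m 1 (-1) (-1) + m (-1) 1 (-1) + m (-1) (-1) (-1)"
    using A8[of "\<lambda>a b c. c \<noteq> 1"] by (simp add: sum8 m_def)
  have T2: "measure M {\<omega>\<in>space M. Yt \<omega> \<noteq> -1} = m 1 1 1 + m 1 (-1) 1 + m (-1) 1 1 + m (-1) (-1) 1"
    using A8[of "\<lambda>a b c. c \<noteq> -1"] by (simp add: sum8 m_def)
  have P1: "measure M {\<omega>\<in>space M. Y \<omega> = 1} = m 1 1 1 + m 1 1 (-1) + m (-1) 1 1 + m (-1) 1 (-1)"
    using A8[of "\<lambda>a b c. b = 1"] by (simp add: sum8 m_def)
  have Pm: "measure M {\<omega>\<in>space M. Y \<omega> = -1} = m 1 (-1) 1 + m 1 (-1) (-1) + m (-1) (-1) 1 + m (-1) (-1) (-1)"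
    using A8[of "\<lambda>a b c. b = -1"] by (simp add: sum8 m_def)
  have N1: "measure M {\<omega>\<in>space M. Y \<omega> = 1 \<and> Yt \<omega> = -1} = m 1 1 (-1) + m (-1) 1 (-1)"
    using A8[of "\<lambda>a b c. b = 1 \<and> c = -1"] by (simp add: sum8 m_def)
  have Nm: "measure M {\<omega>\<in>space M. Y \<omega> = -1 \<and> Yt \<omega> = 1} = m 1 (-1) 1 + m (-1) (-1) 1"
    using A8[of "\<lambda>a b c. b = -1 \<and> c = 1"] by (simp add: sum8 m_def)
  have tot: "m 1 1 1 + m 1 1 (-1) + m 1 (-1) 1 + m 1 (-1) (-1) + m (-1) 1 1 + m (-1) 1 (-1) + m (-1) (-1) 1 + m (-1) (-1) (-1) = 1"
    using A8[of "\<lambda>a b c. True"] prob_space by (simp add: sum8 m_def)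
  have FY: "measure M {\<omega>\<in>space M. f (X \<omega>) = s \<and> Y \<omega> = y} = m s y 1 + m s y (-1)" if "s \<in> {-1,1}" "y \<in> {-1,1}" for s y
    using A8[of "\<lambda>a b c. a = s \<and> b = y"] that by (auto simp: sum8 m_def)
  have CI: "m s y t * measure M {\<omega>\<in>space M. Y \<omega> = y} = (m s y 1 + m s y (-1)) * measure M {\<omega>\<in>space M. Y \<omega> = y \<and> Yt \<omega> = t}"
    if "s \<in> {-1,1}" "y \<in> {-1,1}" for s y t
  proof -
    have "{x. f x = s} \<in> sets borel" using measurable_sets[OF f, of "{s}"] by (simp add: vimage_def)
    from cond_indep[rule_format, OF this, of y t] show ?thesis
      using FY[OF that] by (simp add: m_def)
  qed
  have q: "measure M {\<omega>\<in>space M. Y \<omega> = -1} = 1 - measure M {\<omega>\<in>space M. Y \<omega> = 1}"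
    using tot P1 Pm by linarith
  then show "measure M {\<omega>\<in>space M. Y \<omega> = -1} = 1 - measure M {\<omega>\<in>space M. Y \<omega> = 1}" .
  have q_pos: "0 < measure M {\<omega>\<in>space M. Y \<omega> = -1}" using q p_lt1 by simp
  define b1 where "b1 = m 1 1 1 + m 1 1 (-1)"
  define bm where "bm = m (-1) 1 1 + m (-1) 1 (-1)"
  define c1 where "c1 = m 1 (-1) 1 + m 1 (-1) (-1)"
  define cm where "cm = m (-1) (-1) 1 + m (-1) (-1) (-1)"
  have h1: "m 1 1 (-1) = b1 * e_pos"
    using CI[of 1 1 "-1"] p_pos unfolding b1_def e_pos_def by (simp add: field_simps)
  have h2: "m (-1) 1 (-1) = bm * e_pos"
    using CI[of "-1" 1 "-1"] p_pos unfolding bm_def e_pos_def by (simp add: field_simps)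
  have h3: "m 1 (-1) 1 = c1 * e_neg"
    using CI[of 1 "-1" 1] q_pos unfolding c1_def e_neg_def by (simp add: field_simps)
  have h4: "m (-1) (-1) 1 = cm * e_neg"
    using CI[of "-1" "-1" 1] q_pos unfolding cm_def e_neg_def by (simp add: field_simps)
  have g1: "m 1 1 1 = b1 - b1 * e_pos" using h1 b1_def by simp
  have g2: "m (-1) 1 1 = bm - bm * e_pos" using h2 bm_def by simp
  have g3: "m 1 (-1) (-1) = c1 - c1 * e_neg" using h3 c1_def by simp
  have g4: "m (-1) (-1) (-1) = cm - cm * e_neg" using h4 cm_def by simp
  have tot': "b1 + bm + c1 + cm = 1" using tot unfolding b1_def bm_def c1_def cm_def by simp
  have fv': "\<forall>x. f x \<in> {-1,1}" by fact
  show "peer_risk (joint_distr M X Yt) f = (1 - e_pos - e_neg) *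
     (risk (joint_distr M X Y) f - measure M {\<omega>\<in>space M. f (X \<omega>) = 1} * measure M {\<omega>\<in>space M. Y \<omega> = -1}
       - (1 - measure M {\<omega>\<in>space M. f (X \<omega>) = 1}) * measure M {\<omega>\<in>space M. Y \<omega> = 1})"
    unfolding peer_eq[OF M X_meas Yt_meas f fv'] risk_eq[OF X_meas Y_meas f]
    unfolding R Rt A1 Am T1 T2 P1 Pm h1 h2 h3 h4 g1 g2 g3 g4
    using tot' by algebra
qed

theorem theorem3:
  fixes M :: "'w measure"
    and X :: "'w \<Rightarrow> 'a::euclidean_space"
    and Y Yt :: "'w \<Rightarrow> int"
    and e_pos e_neg :: real
    and F :: "('a \<Rightarrow> int) set"
    and fstar :: "'a \<Rightarrow> int"
  assumes M: "prob_space M"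
    and X_meas: "X \<in> measurable M borel"
    and Y_meas: "Y \<in> measurable M (count_space UNIV)"
    and Yt_meas: "Yt \<in> measurable M (count_space UNIV)"
    and Y_vals: "\<forall>\<omega>\<in>space M. Y \<omega> \<in> {-1, 1}"
    and Yt_vals: "\<forall>\<omega>\<in>space M. Yt \<omega> \<in> {-1, 1}"
    and p_pos: "0 < measure M {\<omega>\<in>space M. Y \<omega> = 1}"
    and p_lt1: "measure M {\<omega>\<in>space M. Y \<omega> = 1} < 1"
    and e_pos_def: "e_pos = measure M {\<omega>\<in>space M. Y \<omega> = 1 \<and> Yt \<omega> = -1}
                            / measure M {\<omega>\<in>space M. Y \<omega> = 1}"
    and e_neg_def: "e_neg = measure M {\<omega>\<in>space M. Y \<omega> = -1 \<and> Yt \<omega> = 1}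
                            / measure M {\<omega>\<in>space M. Y \<omega> = -1}"
    and cond_indep: "\<forall>A\<in>sets borel. \<forall>y y'.
          measure M {\<omega>\<in>space M. X \<omega> \<in> A \<and> Y \<omega> = y \<and> Yt \<omega> = y'}
            * measure M {\<omega>\<in>space M. Y \<omega> = y}
          = measure M {\<omega>\<in>space M. X \<omega> \<in> A \<and> Y \<omega> = y}
            * measure M {\<omega>\<in>space M. Y \<omega> = y \<and> Yt \<omega> = y'}"
    and p_ne_half: "measure M {\<omega>\<in>space M. Y \<omega> = 1} \<noteq> 1/2"
    and noise: "e_neg + e_pos < 1"
    and F_cls: "\<forall>f\<in>F. f \<in> measurable borel (count_space UNIV) \<and> (\<forall>x. f x \<in> {-1, 1})"
    and min_attained: "\<exists>g\<in>F. \<forall>f\<in>F. risk (joint_distr M X Y) g \<le> risk (joint_distr M X Y) f"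
    and fstar_in: "fstar \<in> F"
    and fstar_min: "\<forall>f\<in>F. peer_risk (joint_distr M X Yt) fstar \<le> peer_risk (joint_distr M X Yt) f"
  shows "\<bar>risk (joint_distr M X Y) fstar - (INF f\<in>F. risk (joint_distr M X Y) f)\<bar>
           \<le> \<bar>measure M {\<omega>\<in>space M. Y \<omega> = 1} - measure M {\<omega>\<in>space M. Y \<omega> = -1}\<bar>"
proof -
  let ?R = "\<lambda>f. risk (joint_distr M X Y) f"
  let ?P = "\<lambda>f. peer_risk (joint_distr M X Yt) f"
  let ?a = "\<lambda>f. measure M {\<omega>\<in>space M. f (X \<omega>) = 1}"
  let ?p = "measure M {\<omega>\<in>space M. Y \<omega> = 1}"
  let ?q = "measure M {\<omega>\<in>space M. Y \<omega> = -1}"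
  have PF: "?P f = (1 - e_pos - e_neg) * (?R f - ?a f * ?q - (1 - ?a f) * ?p)" if "f \<in> F" for f
    using per_f(1)[OF M X_meas Y_meas Yt_meas Y_vals Yt_vals p_pos p_lt1 e_pos_def e_neg_def cond_indep, of f]
      F_cls that by blast
  have q: "?q = 1 - ?p"
    using per_f(2)[OF M X_meas Y_meas Yt_meas Y_vals Yt_vals p_pos p_lt1 e_pos_def e_neg_def cond_indep, of fstar]
      F_cls fstar_in by blast
  obtain g where g: "g \<in> F" "\<forall>f\<in>F. ?R g \<le> ?R f" using min_attained by blast
  have INF: "(INF f\<in>F. ?R f) = ?R g"
  proof (rule antisym)
    show "(INF f\<in>F. ?R f) \<le> ?R g"
      by (rule cINF_lower[OF _ g(1)]) (auto simp: bdd_below_def risk_def intro!: exI[of _ 0])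
    show "?R g \<le> (INF f\<in>F. ?R f)"
      using g by (intro cINF_greatest) auto
  qed
  have c: "0 < 1 - e_pos - e_neg" using noise by simp
  have "?P fstar \<le> ?P g" using fstar_min g(1) by blast
  then have "(1 - e_pos - e_neg) * (?R fstar - ?a fstar * ?q - (1 - ?a fstar) * ?p)
     \<le> (1 - e_pos - e_neg) * (?R g - ?a g * ?q - (1 - ?a g) * ?p)"
    using PF[OF fstar_in] PF[OF g(1)] by simp
  then have le: "?R fstar - ?a fstar * ?q - (1 - ?a fstar) * ?p \<le> ?R g - ?a g * ?q - (1 - ?a g) * ?p"
    using c by simp
  have diff: "?R fstar - ?R g \<le> (?a fstar - ?a g) * (?q - ?p)"
    using le by (simp add: algebra_simps)
  have a1: "0 \<le> ?a fstar" "?a fstar \<le> 1" "0 \<le> ?a g" "?a g \<le> 1"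
    using M by (auto simp: prob_space.prob_le_1)
  have "(?a fstar - ?a g) * (?q - ?p) \<le> \<bar>(?a fstar - ?a g) * (?q - ?p)\<bar>" by simp
  also have "\<dots> = \<bar>?a fstar - ?a g\<bar> * \<bar>?q - ?p\<bar>" by (simp add: abs_mult)
  also have "\<dots> \<le> 1 * \<bar>?q - ?p\<bar>"
  proof (rule mult_right_mono)
    show "\<bar>?a fstar - ?a g\<bar> \<le> 1" unfolding abs_le_iff using a1 by linarith
  qed simp
  finally have "?R fstar - ?R g \<le> \<bar>?p - ?q\<bar>" using diff by simp
  moreover have "?R g \<le> ?R fstar" using g fstar_in by blast
  ultimately show ?thesis unfolding INF by simp
qed

end
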